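(* Let $(M,g)$ be a space-time satisfying Einstein's field equation $R_{ij}-\frac12 R g_{ij}+\Lambda g_{ij}=kT_{ij}$, and suppose its $\mathcal{W}^{\star}$-curvature tensor is covariantly constant, $\nabla_m\mathcal{W}^{\star}_{ijkl}=0$. Then $M$ is conformally semi-symmetric and the energy-momentum tensor $T_{ij}$ is semi-symmetric.
   Context: A space-time is a $4$-dimensional Lorentzian manifold $(M,g)$ with Levi-Civita connection $\nabla$. $R_{ijkl}$ denotes the components of the Riemann curvature tensor, with index conventions such that the Ricci tensor is $R_{jk}=g^{il}R_{ijkl}$; $R=g^{jk}R_{jk}$ is the scalar curvature. The $\mathcal{W}^{\star}$-curvature tensor is $\mathcal{W}^{\star}_{ijkl}=R_{ijkl}-\tfrac{1}{3}\left[g_{jk}R_{il}-g_{jl}R_{ik}\right]$. $\Lambda$ is a constant, $k\neq0$ a constant, $T_{ij}$ a symmetric $(0,2)$-tensor. A tensor $A$ is semi-symmetric if $(\nabla_\mu\nabla_\nu-\nabla_\nu\nabla_\mu)A=0$ for all indices; $M$ is conformally semi-symmetric if its Weyl conformal curvature tensor $\mathcal{C}_{ijkl}$ is semi-symmetric. *)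

theory Defs
  imports "HOL-Analysis.Analysis"
begin

text \<open>A space-time is represented on a coordinate chart: an open set U of real^4 with a
smooth metric g (components g_ij as functions of the coordinates).\<close>

type_synonym point = "real^4"
type_synonym metric = "point \<Rightarrow> 4 \<Rightarrow> 4 \<Rightarrow> real"
type_synonym ctensor = "point \<Rightarrow> 4 list \<Rightarrow> real"  \<comment> \<open>covariant tensor field, indices as a list\<close>

definition pd :: "(point \<Rightarrow> real) \<Rightarrow> 4 \<Rightarrow> point \<Rightarrow> real" where
  "pd f i x = frechet_derivative f (at x) (axis i 1)"

fun Ck_on :: "nat \<Rightarrow> point set \<Rightarrow> (point \<Rightarrow> real) \<Rightarrow> bool" where
  "Ck_on 0 U f = continuous_on U f"
| "Ck_on (Suc k) U f = ((\<forall>x\<in>U. f differentiable (at x)) \<and> (\<forall>i. Ck_on k U (pd f i)))"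

definition smooth_fun_on :: "point set \<Rightarrow> (point \<Rightarrow> real) \<Rightarrow> bool" where
  "smooth_fun_on U f = (\<forall>k. Ck_on k U f)"

definition gmat :: "metric \<Rightarrow> point \<Rightarrow> real^4^4" where
  "gmat g x = (\<chi> i j. g x i j)"

definition lorentz_diag :: "real^4^4" where
  "lorentz_diag = (\<chi> i j. if i = j then (if i = 0 then -1 else 1) else 0)"

definition lorentzian_metric_on :: "point set \<Rightarrow> metric \<Rightarrow> bool" where
  "lorentzian_metric_on U g =
     (open U \<and> U \<noteq> {} \<and>
      (\<forall>i j. smooth_fun_on U (\<lambda>x. g x i j)) \<and>
      (\<forall>x\<in>U. \<forall>i j. g x i j = g x j i) \<and>
      (\<forall>x\<in>U. \<exists>P::real^4^4. invertible P \<and> transpose P ** gmat g x ** P = lorentz_diag))"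

definition ginv :: "metric \<Rightarrow> point \<Rightarrow> 4 \<Rightarrow> 4 \<Rightarrow> real" where
  "ginv g x i j = matrix_inv (gmat g x) $ i $ j"

definition Chr :: "metric \<Rightarrow> point \<Rightarrow> 4 \<Rightarrow> 4 \<Rightarrow> 4 \<Rightarrow> real" where
  "Chr g x k i j = (1/2) * (\<Sum>l\<in>UNIV. ginv g x k l *
      (pd (\<lambda>y. g y j l) i x + pd (\<lambda>y. g y i l) j x - pd (\<lambda>y. g y i j) l x))"

text \<open>R_ijkl = g(R(d_i,d_j) d_k, d_l), R(X,Y)=[nabla_X,nabla_Y]-nabla_[X,Y];
 then R_jk = g^il R_ijkl is the usual Ricci tensor.\<close>
definition Riem :: "metric \<Rightarrow> point \<Rightarrow> 4 \<Rightarrow> 4 \<Rightarrow> 4 \<Rightarrow> 4 \<Rightarrow> real" where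
  "Riem g x i j k l = (\<Sum>p\<in>UNIV. g x l p *
      (pd (\<lambda>y. Chr g y p j k) i x - pd (\<lambda>y. Chr g y p i k) j x
       + (\<Sum>m\<in>UNIV. Chr g x m j k * Chr g x p i m - Chr g x m i k * Chr g x p j m)))"

definition Ric :: "metric \<Rightarrow> point \<Rightarrow> 4 \<Rightarrow> 4 \<Rightarrow> real" where
  "Ric g x j k = (\<Sum>i\<in>UNIV. \<Sum>l\<in>UNIV. ginv g x i l * Riem g x i j k l)"

definition Scal :: "metric \<Rightarrow> point \<Rightarrow> real" where
  "Scal g x = (\<Sum>j\<in>UNIV. \<Sum>k\<in>UNIV. ginv g x j k * Ric g x j k)"

definition Wstar :: "metric \<Rightarrow> point \<Rightarrow> 4 \<Rightarrow> 4 \<Rightarrow> 4 \<Rightarrow> 4 \<Rightarrow> real" where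
  "Wstar g x i j k l = Riem g x i j k l - (1/3) * (g x j k * Ric g x i l - g x j l * Ric g x i k)"

definition Weyl :: "metric \<Rightarrow> point \<Rightarrow> 4 \<Rightarrow> 4 \<Rightarrow> 4 \<Rightarrow> 4 \<Rightarrow> real" where
  "Weyl g x i j k l = Riem g x i j k l
     - (1/2) * (g x j k * Ric g x i l - g x j l * Ric g x i k + g x i l * Ric g x j k - g x i k * Ric g x j l)
     + (Scal g x / 6) * (g x j k * g x i l - g x j l * g x i k)"

definition as2 :: "(point \<Rightarrow> 4 \<Rightarrow> 4 \<Rightarrow> real) \<Rightarrow> ctensor" where
  "as2 A x idx = A x (idx!0) (idx!1)"

definition as4 :: "(point \<Rightarrow> 4 \<Rightarrow> 4 \<Rightarrow> 4 \<Rightarrow> 4 \<Rightarrow> real) \<Rightarrow> ctensor" where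
  "as4 A x idx = A x (idx!0) (idx!1) (idx!2) (idx!3)"

text \<open>Levi-Civita covariant derivative of a covariant tensor field; the new
 (differentiation) index is placed first: (nabla A)(m # idx) = nabla_m A_idx.\<close>
definition cov :: "metric \<Rightarrow> ctensor \<Rightarrow> ctensor" where
  "cov g A x idx = (case idx of [] \<Rightarrow> 0
     | m # rest \<Rightarrow> pd (\<lambda>y. A y rest) m x
         - (\<Sum>a<length rest. \<Sum>p\<in>UNIV. Chr g x p m (rest ! a) * A x (rest[a := p])))"

definition semi_symmetric_on :: "point set \<Rightarrow> metric \<Rightarrow> nat \<Rightarrow> ctensor \<Rightarrow> bool" where
  "semi_symmetric_on U g r A =
     (\<forall>x\<in>U. \<forall>mu nu idx. length idx = r \<longrightarrow>
        cov g (cov g A) x (mu # nu # idx) = cov g (cov g A) x (nu # mu # idx))"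

definition covariantly_constant_on :: "point set \<Rightarrow> metric \<Rightarrow> nat \<Rightarrow> ctensor \<Rightarrow> bool" where
  "covariantly_constant_on U g r A =
     (\<forall>x\<in>U. \<forall>idx. length idx = Suc r \<longrightarrow> cov g A x idx = 0)"

end

theory Submission
  imports Defs
begin


lemma pd_has: "(f has_derivative F) (at x) \<Longrightarrow> pd f i x = F (axis i 1)"
  by (simp add: pd_def frechet_derivative_at[symmetric])

lemma pd_works: "f differentiable (at x) \<Longrightarrow> (f has_derivative frechet_derivative f (at x)) (at x)"
  by (simp add: frechet_derivative_works)

lemma pd_add: "f differentiable (at x) \<Longrightarrow> h differentiable (at x) \<Longrightarrow>
   pd (\<lambda>y. f y + h y) i x = pd f i x + pd h i x"
proof -
  assume a: "f differentiable (at x)" "h differentiable (at x)"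
  have "((\<lambda>y. f y + h y) has_derivative (\<lambda>v. frechet_derivative f (at x) v + frechet_derivative h (at x) v)) (at x)"
    by (rule has_derivative_add[OF pd_works[OF a(1)] pd_works[OF a(2)]])
  from pd_has[OF this] show ?thesis by (simp add: pd_def)
qed

lemma pd_diff: "f differentiable (at x) \<Longrightarrow> h differentiable (at x) \<Longrightarrow>
   pd (\<lambda>y. f y - h y) i x = pd f i x - pd h i x"
proof -
  assume a: "f differentiable (at x)" "h differentiable (at x)"
  have "((\<lambda>y. f y - h y) has_derivative (\<lambda>v. frechet_derivative f (at x) v - frechet_derivative h (at x) v)) (at x)"
    by (rule has_derivative_diff[OF pd_works[OF a(1)] pd_works[OF a(2)]])
  from pd_has[OF this] show ?thesis by (simp add: pd_def)
qed

lemma pd_mult: "f differentiable (at x) \<Longrightarrow> h differentiable (at x) \<Longrightarrow>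
   pd (\<lambda>y. f y * h y) i x = f x * pd h i x + pd f i x * h x"
proof -
  assume a: "f differentiable (at x)" "h differentiable (at x)"
  have "((\<lambda>y. f y * h y) has_derivative (\<lambda>v. f x * frechet_derivative h (at x) v + frechet_derivative f (at x) v * h x)) (at x)"
    by (rule has_derivative_mult[OF pd_works[OF a(1)] pd_works[OF a(2)]])
  from pd_has[OF this] show ?thesis by (simp add: pd_def)
qed

lemma pd_const: "pd (\<lambda>y. c) i x = 0"
  using pd_has[OF has_derivative_const] by simp

lemma pd_cmult: "f differentiable (at x) \<Longrightarrow> pd (\<lambda>y. c * f y) i x = c * pd f i x"
  using pd_mult[of "\<lambda>y. c" x f i] by (simp add: pd_const)

lemma pd_minus: "f differentiable (at x) \<Longrightarrow> pd (\<lambda>y. - f y) i x = - pd f i x"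
  using pd_cmult[of f x "-1" i] by simp

lemma pd_sum: "finite A \<Longrightarrow> (\<And>a. a \<in> A \<Longrightarrow> f a differentiable (at x)) \<Longrightarrow>
   pd (\<lambda>y. \<Sum>a\<in>A. f a y) i x = (\<Sum>a\<in>A. pd (f a) i x)"
proof -
  assume a: "finite A" "\<And>a. a \<in> A \<Longrightarrow> f a differentiable (at x)"
  have "((\<lambda>y. \<Sum>a\<in>A. f a y) has_derivative (\<lambda>v. \<Sum>a\<in>A. frechet_derivative (f a) (at x) v)) (at x)"
    by (rule has_derivative_sum) (use a pd_works in auto)
  from pd_has[OF this] show ?thesis by (simp add: pd_def)
qed

lemma pd_local: assumes "open U" "x \<in> U" "\<And>y. y \<in> U \<Longrightarrow> f y = h y" "f differentiable (at x)"
  shows "pd f i x = pd h i x" "h differentiable (at x)"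
proof -
  have hd: "(h has_derivative frechet_derivative f (at x)) (at x)"
    by (rule has_derivative_transform_within_open[OF pd_works[OF assms(4)] assms(1,2)]) (use assms(3) in auto)
  show "pd f i x = pd h i x" using pd_has[OF hd] by (simp add: pd_def)
  show "h differentiable (at x)" using hd by (auto simp: differentiable_def)
qed

lemma pd_zero_local: assumes "open U" "x \<in> U" "\<And>y. y \<in> U \<Longrightarrow> f y = 0"
  shows "pd f i x = 0"
  using pd_local(1)[of U x "\<lambda>y. 0" f i] assms pd_const by auto

lemma mult_delta[simp]: "(f::real) * (if P then 1 else 0) = (if P then f else 0)"
  "(if P then 1 else 0) * f = (if P then f else 0)"
  "(if P then f else 0) / c = (if P then f / c else 0)"
  by auto

section \<open>C^k\<close>

lemma Ck_mono: "Ck_on (Suc k) U f \<Longrightarrow> Ck_on k U f"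
proof (induction k arbitrary: f)
  case 0
  then have "\<forall>x\<in>U. f differentiable (at x)" by simp
  then have "\<forall>x\<in>U. isCont f x" using differentiable_imp_continuous_within by blast
  then show ?case by (simp add: continuous_at_imp_continuous_on)
next
  case (Suc k)
  have "\<forall>x\<in>U. f differentiable (at x)" "\<And>i. Ck_on (Suc k) U (pd f i)" using Suc.prems by auto
  then show ?case using Suc.IH by simp
qed

lemma Ck_cong: "open U \<Longrightarrow> Ck_on k U f \<Longrightarrow> (\<And>y. y \<in> U \<Longrightarrow> f y = h y) \<Longrightarrow> Ck_on k U h"
proof (induction k arbitrary: f h)
  case 0
  then show ?case using continuous_on_cong[of U U f h] by simp
next
  case (Suc k)
  have fd: "\<forall>x\<in>U. f differentiable (at x)" and fk: "\<And>i. Ck_on k U (pd f i)"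
    using Suc.prems(2) by auto
  have d: "\<forall>x\<in>U. h differentiable (at x)"
  proof
    fix x assume "x \<in> U"
    then show "h differentiable (at x)"
      using pd_local(2)[of U x f h] Suc.prems fd \<open>x \<in> U\<close> by blast
  qed
  have "Ck_on k U (pd h i)" for i
  proof (rule Suc.IH[OF Suc.prems(1) fk])
    fix y assume "y \<in> U"
    then show "pd f i y = pd h i y"
      using pd_local(1)[of U y f h i] Suc.prems fd \<open>y \<in> U\<close> by blast
  qed
  with d show ?case by simp
qed

lemma Ck_const: "Ck_on k U (\<lambda>x. c)"
proof (induction k arbitrary: c)
  case 0 then show ?case by (simp add: continuous_on_const)
next
  case (Suc k)
  have e: "pd (\<lambda>x. c) i = (\<lambda>x. 0)" for i by (rule ext) (rule pd_const)
  show ?case by (simp add: e Suc)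
qed

lemma Ck_add: "open U \<Longrightarrow> Ck_on k U f \<Longrightarrow> Ck_on k U h \<Longrightarrow> Ck_on k U (\<lambda>x. f x + h x)"
proof (induction k arbitrary: f h)
  case 0 then show ?case by (auto intro: continuous_on_add)
next
  case (Suc k)
  have "Ck_on k U (pd (\<lambda>x. f x + h x) i)" for i
  proof (rule Ck_cong[where f="\<lambda>x. pd f i x + pd h i x"])
    show "Ck_on k U (\<lambda>x. pd f i x + pd h i x)" using Suc.IH[of "pd f i" "pd h i"] Suc.prems by auto
  qed (use Suc.prems in \<open>auto simp: pd_add\<close>)
  with Suc.prems show ?case by auto
qed

lemma Ck_mult: "open U \<Longrightarrow> Ck_on k U f \<Longrightarrow> Ck_on k U h \<Longrightarrow> Ck_on k U (\<lambda>x. f x * h x)"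
proof (induction k arbitrary: f h)
  case 0 then show ?case by (auto intro: continuous_on_mult)
next
  case (Suc k)
  have "Ck_on k U (pd (\<lambda>x. f x * h x) i)" for i
  proof -
    have f: "Ck_on k U f" "Ck_on k U (pd f i)" using Suc.prems Ck_mono by auto
    have h: "Ck_on k U h" "Ck_on k U (pd h i)" using Suc.prems Ck_mono by auto
    have "Ck_on k U (\<lambda>x. f x * pd h i x + pd f i x * h x)"
      by (rule Ck_add[OF Suc.prems(1) Suc.IH[OF Suc.prems(1) f(1) h(2)] Suc.IH[OF Suc.prems(1) f(2) h(1)]])
    then show ?thesis
      by (rule Ck_cong[OF Suc.prems(1)]) (use Suc.prems in \<open>auto simp: pd_mult\<close>)
  qed
  with Suc.prems show ?case by auto
qed

lemma Ck_inv: "open U \<Longrightarrow> Ck_on k U f \<Longrightarrow> (\<And>x. x \<in> U \<Longrightarrow> f x \<noteq> 0) \<Longrightarrow> Ck_on k U (\<lambda>x. 1 / f x)"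
proof (induction k arbitrary: f)
  case 0 then show ?case by (auto intro!: continuous_on_divide continuous_on_const)
next
  case (Suc k)
  have d: "\<forall>x\<in>U. (\<lambda>x. 1 / f x) differentiable (at x)"
    using Suc.prems by (auto intro!: differentiable_divide)
  have "Ck_on k U (pd (\<lambda>x. 1 / f x) i)" for i
  proof -
    have ck: "Ck_on k U (\<lambda>x. 1 / f x)" using Suc Ck_mono by blast
    have "Ck_on k U (\<lambda>x. (-1) * pd f i x * ((1 / f x) * (1 / f x)))"
      using Suc.prems ck by (intro Ck_mult Ck_const) auto
    moreover have "pd (\<lambda>x. 1 / f x) i x = (-1) * pd f i x * ((1 / f x) * (1 / f x))" if "x \<in> U" for x
    proof -
      have fd: "f differentiable (at x)" using Suc.prems that by auto
      have "((\<lambda>x. 1 / f x) has_derivative (\<lambda>v. - ((1 / f x) * frechet_derivative f (at x) v * (1 / f x)))) (at x)"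
        using Deriv.has_derivative_inverse[OF that[THEN Suc.prems(3)] pd_works[OF fd]]
        by (simp add: divide_inverse)
      from pd_has[OF this] show ?thesis by (simp add: pd_def)
    qed
    ultimately show ?thesis using Suc.prems(1) Ck_cong[of U k _ "pd (\<lambda>x. 1 / f x) i"] by auto
  qed
  with d show ?case by auto
qed

definition sm :: "point set \<Rightarrow> (point \<Rightarrow> real) \<Rightarrow> bool" where
  "sm U f = (\<forall>k. Ck_on k U f)"

lemma sm_smooth: "smooth_fun_on U f = sm U f" by (simp add: smooth_fun_on_def sm_def)

lemma sm_const: "sm U (\<lambda>x. c)" by (simp add: sm_def Ck_const)
lemma sm_add: "open U \<Longrightarrow> sm U f \<Longrightarrow> sm U h \<Longrightarrow> sm U (\<lambda>x. f x + h x)" by (simp add: sm_def Ck_add)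
lemma sm_mult: "open U \<Longrightarrow> sm U f \<Longrightarrow> sm U h \<Longrightarrow> sm U (\<lambda>x. f x * h x)" by (simp add: sm_def Ck_mult)
lemma sm_minus: "open U \<Longrightarrow> sm U f \<Longrightarrow> sm U (\<lambda>x. - f x)"
  using sm_mult[of U "\<lambda>x. -1" f] sm_const[of U "-1"] by simp
lemma sm_diff: "open U \<Longrightarrow> sm U f \<Longrightarrow> sm U h \<Longrightarrow> sm U (\<lambda>x. f x - h x)"
  using sm_add[of U f "\<lambda>x. - h x"] sm_minus by simp
lemma sm_inv: "open U \<Longrightarrow> sm U f \<Longrightarrow> (\<And>x. x \<in> U \<Longrightarrow> f x \<noteq> 0) \<Longrightarrow> sm U (\<lambda>x. 1 / f x)"
  by (simp add: sm_def Ck_inv)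
lemma sm_cong: "open U \<Longrightarrow> sm U f \<Longrightarrow> (\<And>y. y \<in> U \<Longrightarrow> f y = h y) \<Longrightarrow> sm U h"
  using Ck_cong unfolding sm_def by blast
lemma sm_pd: "sm U f \<Longrightarrow> sm U (pd f i)"
  unfolding sm_def proof
  fix k assume "\<forall>k. Ck_on k U f"
  then have "Ck_on (Suc k) U f" by blast
  then show "Ck_on k U (pd f i)" by simp
qed
lemma sm_diffble: "sm U f \<Longrightarrow> x \<in> U \<Longrightarrow> f differentiable (at x)"
proof -
  assume "sm U f" "x \<in> U"
  then have "Ck_on (Suc 0) U f" unfolding sm_def by blast
  then show ?thesis using \<open>x \<in> U\<close> by simp
qed
lemma sm_cont: "sm U f \<Longrightarrow> continuous_on U f"
proof -
  assume "sm U f"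
  then have "Ck_on 0 U f" unfolding sm_def by blast
  then show ?thesis by simp
qed

lemma sm_sum: assumes U: "open U" shows "finite A \<Longrightarrow> (\<And>a. a \<in> A \<Longrightarrow> sm U (f a)) \<Longrightarrow> sm U (\<lambda>x. \<Sum>a\<in>A. f a x)"
proof (induction A rule: finite_induct)
  case empty then show ?case by (simp add: sm_const)
next
  case (insert a A)
  have 1: "sm U (f a)" using insert.prems by simp
  have 2: "sm U (\<lambda>x. \<Sum>a\<in>A. f a x)" using insert.IH insert.prems by simp
  show ?case using sm_add[OF U 1 2] insert.hyps by simp
qed

lemma sm_prod: assumes U: "open U" shows "finite A \<Longrightarrow> (\<And>a. a \<in> A \<Longrightarrow> sm U (f a)) \<Longrightarrow> sm U (\<lambda>x. \<Prod>a\<in>A. f a x)"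
proof (induction A rule: finite_induct)
  case empty then show ?case by (simp add: sm_const)
next
  case (insert a A)
  have 1: "sm U (f a)" using insert.prems by simp
  have 2: "sm U (\<lambda>x. \<Prod>a\<in>A. f a x)" using insert.IH insert.prems by simp
  show ?case using sm_mult[OF U 1 2] insert.hyps by simp
qed

lemma sm_det: "open U \<Longrightarrow> (\<And>i j. sm U (\<lambda>x. M x $ i $ j)) \<Longrightarrow> sm U (\<lambda>x. det (M x :: real^'n^'n))"
  unfolding det_def
  apply (rule sm_sum, assumption, rule finite_permutations[OF finite_class.finite_UNIV])
  apply (rule sm_mult, assumption, rule sm_const)
  apply (rule sm_prod, assumption, rule finite_class.finite_UNIV)
  apply assumption
  done




locale ST = fixes U :: "point set" and g :: metric
  assumes lor: "lorentzian_metric_on U g"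
begin

lemma U_open: "open U" using lor by (simp add: lorentzian_metric_on_def)
lemma g_sm: "sm U (\<lambda>x. g x i j)" using lor by (simp add: lorentzian_metric_on_def sm_smooth)
lemma g_sym: "x \<in> U \<Longrightarrow> g x i j = g x j i" using lor by (simp add: lorentzian_metric_on_def)

lemma det_lorentz: "det lorentz_diag \<noteq> 0"
proof -
  have "det lorentz_diag = (\<Prod>i\<in>UNIV. lorentz_diag $ i $ i)"
    by (rule det_diagonal) (simp add: lorentz_diag_def)
  also have "\<dots> \<noteq> 0" by (simp add: lorentz_diag_def)
  finally show ?thesis .
qed

lemma det_nz: assumes "x \<in> U" shows "det (gmat g x) \<noteq> 0"
proof -
  have "\<exists>P::real^4^4. invertible P \<and> transpose P ** gmat g x ** P = lorentz_diag"
    using lor assms unfolding lorentzian_metric_on_def by blast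
  then obtain P :: "real^4^4" where P: "invertible P" "transpose P ** gmat g x ** P = lorentz_diag"
    by blast
  have "det (transpose P ** gmat g x ** P) = det P * det (gmat g x) * det P"
    by (simp add: det_mul)
  then have "det P * det (gmat g x) * det P \<noteq> 0" using P(2) det_lorentz by simp
  then show ?thesis by auto
qed

lemma inv_props: assumes "x \<in> U"
  shows "gmat g x ** matrix_inv (gmat g x) = mat 1" "matrix_inv (gmat g x) ** gmat g x = mat 1"
proof -
  have "invertible (gmat g x)" using det_nz[OF assms] invertible_det_nz by blast
  then have "\<exists>A'. gmat g x ** A' = mat 1 \<and> A' ** gmat g x = mat 1" by (simp add: invertible_def)
  then have "gmat g x ** matrix_inv (gmat g x) = mat 1 \<and> matrix_inv (gmat g x) ** gmat g x = mat 1"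
    unfolding matrix_inv_def by (rule someI_ex)
  then show "gmat g x ** matrix_inv (gmat g x) = mat 1" "matrix_inv (gmat g x) ** gmat g x = mat 1" by auto
qed

lemma g_ginv: "x \<in> U \<Longrightarrow> (\<Sum>k\<in>UNIV. g x i k * ginv g x k j) = (if i = j then 1 else 0)"
  using inv_props(1)[of x] unfolding ginv_def
  by (simp add: matrix_matrix_mult_def mat_def gmat_def vec_eq_iff)

lemma ginv_g: "x \<in> U \<Longrightarrow> (\<Sum>k\<in>UNIV. ginv g x i k * g x k j) = (if i = j then 1 else 0)"
  using inv_props(2)[of x] unfolding ginv_def
  by (simp add: matrix_matrix_mult_def mat_def gmat_def vec_eq_iff)

lemma ginv_cramer: assumes x: "x \<in> U"
  shows "ginv g x i j = det (\<chi> r c. if c = i then axis j 1 $ r else gmat g x $ r $ c) / det (gmat g x)"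
proof -
  define v :: "real^4" where "v = (\<chi> k. matrix_inv (gmat g x) $ k $ j)"
  have "gmat g x *v v = axis j 1"
    using inv_props(1)[OF x]
    by (simp add: v_def matrix_vector_mult_def matrix_matrix_mult_def vec_eq_iff mat_def axis_def)
  then have "v = (\<chi> k. det (\<chi> r c. if c = k then axis j 1 $ r else gmat g x $ r $ c) / det (gmat g x))"
    using cramer[OF det_nz[OF x]] by blast
  then have "v $ i = det (\<chi> r c. if c = i then axis j 1 $ r else gmat g x $ r $ c) / det (gmat g x)"
    by simp
  then show ?thesis by (simp add: v_def ginv_def)
qed

lemma ginv_sm: "sm U (\<lambda>x. ginv g x i j)"
proof (rule sm_cong[OF U_open])
  have a: "sm U (\<lambda>x. det (\<chi> r c. if c = i then axis j 1 $ r else gmat g x $ r $ c))"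
  proof (rule sm_det[OF U_open])
    fix r c
    show "sm U (\<lambda>x. (\<chi> r c. if c = i then axis j 1 $ r else gmat g x $ r $ c) $ r $ c)"
      by (cases "c = i") (simp_all add: sm_const gmat_def g_sm)
  qed
  have b: "sm U (\<lambda>x. 1 / det (gmat g x))"
    by (rule sm_inv[OF U_open sm_det[OF U_open]]) (simp_all add: gmat_def g_sm det_nz[unfolded gmat_def])
  show "sm U (\<lambda>x. det (\<chi> r c. if c = i then axis j 1 $ r else gmat g x $ r $ c) * (1 / det (gmat g x)))"
    by (rule sm_mult[OF U_open a b])
  show "\<And>y. y \<in> U \<Longrightarrow> det (\<chi> r c. if c = i then axis j 1 $ r else gmat g y $ r $ c) * (1 / det (gmat g y)) = ginv g y i j"
    by (simp add: ginv_cramer)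
qed

end



context ST begin

lemmas smI = sm_add[OF U_open] sm_diff[OF U_open] sm_mult[OF U_open] sm_sum[OF U_open] sm_const sm_pd
  g_sm ginv_sm finite_class.finite_UNIV sm_minus[OF U_open]

lemma Chr_sm: "sm U (\<lambda>x. Chr g x k i j)"
  unfolding Chr_def by (intro smI)

lemma Riem_sm: "sm U (\<lambda>x. Riem g x i j k l)"
  unfolding Riem_def by (intro smI Chr_sm)

lemma Ric_sm: "sm U (\<lambda>x. Ric g x j k)"
  unfolding Ric_def by (intro smI Riem_sm)

lemma Scal_sm: "sm U (\<lambda>x. Scal g x)"
  unfolding Scal_def by (intro smI Ric_sm)

lemma pd_gsym: "x \<in> U \<Longrightarrow> pd (\<lambda>y. g y j i) m x = pd (\<lambda>y. g y i j) m x"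
  using pd_local(1)[OF U_open, of x "\<lambda>y. g y j i" "\<lambda>y. g y i j" m] g_sym sm_diffble[OF g_sm] by blast

lemma Chr_sym: "x \<in> U \<Longrightarrow> Chr g x k i j = Chr g x k j i"
  unfolding Chr_def by (simp add: pd_gsym algebra_simps)

lemma Chr_low: assumes x: "x \<in> U"
  shows "(\<Sum>p\<in>UNIV. Chr g x p m i * g x p j) =
    (1/2) * (pd (\<lambda>y. g y i j) m x + pd (\<lambda>y. g y m j) i x - pd (\<lambda>y. g y m i) j x)"
proof -
  define A where "A l = pd (\<lambda>y. g y i l) m x + pd (\<lambda>y. g y m l) i x - pd (\<lambda>y. g y m i) l x" for l
  have gs: "g x p j = g x j p" for p using g_sym[OF x] by simp
  have "(\<Sum>p\<in>UNIV. Chr g x p m i * g x p j) = (\<Sum>p\<in>UNIV. \<Sum>l\<in>UNIV. (1/2) * (A l * (g x j p * ginv g x p l)))"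
    unfolding Chr_def A_def gs by (simp add: sum_distrib_left sum_distrib_right mult_ac)
  also have "\<dots> = (\<Sum>l\<in>UNIV. (1/2) * A l * (\<Sum>p\<in>UNIV. g x j p * ginv g x p l))"
    by (subst sum.swap) (simp add: sum_distrib_left mult_ac)
  also have "\<dots> = (1/2) * A j"
    by (simp add: g_ginv[OF x])
  finally show ?thesis by (simp add: A_def)
qed

lemma compat: assumes x: "x \<in> U"
  shows "pd (\<lambda>y. g y i j) m x = (\<Sum>p\<in>UNIV. Chr g x p m i * g x p j) + (\<Sum>p\<in>UNIV. Chr g x p m j * g x i p)"
proof -
  have "(\<Sum>p\<in>UNIV. Chr g x p m j * g x i p) = (\<Sum>p\<in>UNIV. Chr g x p m j * g x p i)"
    using g_sym[OF x] by simp
  then show ?thesis using Chr_low[OF x, of m i j] Chr_low[OF x, of m j i]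
    pd_gsym[OF x, of j i m] pd_gsym[OF x, of i m j] pd_gsym[OF x, of j m i]
    by (simp add: algebra_simps)
qed

lemma dginv: assumes x: "x \<in> U"
  shows "pd (\<lambda>y. ginv g y a b) m x =
    - (\<Sum>d\<in>UNIV. (\<Sum>c\<in>UNIV. ginv g x a c * pd (\<lambda>y. g y c d) m x) * ginv g x d b)"
proof -
  let ?dG = "\<lambda>c d. pd (\<lambda>y. g y c d) m x"
  let ?dI = "\<lambda>a c. pd (\<lambda>y. ginv g y a c) m x"
  have e1: "(\<Sum>c\<in>UNIV. ?dI a c * g x c d) = - (\<Sum>c\<in>UNIV. ginv g x a c * ?dG c d)" for d
  proof -
    have "pd (\<lambda>y. \<Sum>c\<in>UNIV. ginv g y a c * g y c d) m x = pd (\<lambda>y. if a = d then 1 else 0) m x"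
      by (rule pd_local(1)[OF U_open x]) (auto simp: ginv_g intro!: sm_diffble[OF _ x] smI)
    also have "\<dots> = 0" by (rule pd_const)
    finally have z: "pd (\<lambda>y. \<Sum>c\<in>UNIV. ginv g y a c * g y c d) m x = 0" .
    have "pd (\<lambda>y. \<Sum>c\<in>UNIV. ginv g y a c * g y c d) m x = (\<Sum>c\<in>UNIV. pd (\<lambda>y. ginv g y a c * g y c d) m x)"
      by (rule pd_sum) (auto intro!: sm_diffble[OF _ x] smI)
    also have "\<dots> = (\<Sum>c\<in>UNIV. ginv g x a c * ?dG c d + ?dI a c * g x c d)"
      by (rule sum.cong[OF refl], rule pd_mult) (auto intro!: sm_diffble[OF _ x] smI)
    finally show ?thesis using z by (simp add: sum.distrib eq_neg_iff_add_eq_0 add.commute)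
  qed
  have "?dI a b = (\<Sum>c\<in>UNIV. ?dI a c * (\<Sum>d\<in>UNIV. g x c d * ginv g x d b))"
    by (simp add: g_ginv[OF x])
  also have "\<dots> = (\<Sum>d\<in>UNIV. (\<Sum>c\<in>UNIV. ?dI a c * g x c d) * ginv g x d b)"
    by (simp add: sum_distrib_left sum_distrib_right mult_ac) (rule sum.swap)
  also have "\<dots> = - (\<Sum>d\<in>UNIV. (\<Sum>c\<in>UNIV. ginv g x a c * ?dG c d) * ginv g x d b)"
    by (simp add: e1 sum_negf)
  finally show ?thesis .
qed

end



context ST begin

definition D2 :: "(point \<Rightarrow> 4 \<Rightarrow> 4 \<Rightarrow> real) \<Rightarrow> point \<Rightarrow> 4 \<Rightarrow> 4 \<Rightarrow> 4 \<Rightarrow> real" where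
  "D2 B x m i j = pd (\<lambda>y. B y i j) m x - (\<Sum>p\<in>UNIV. Chr g x p m i * B x p j) - (\<Sum>p\<in>UNIV. Chr g x p m j * B x i p)"

definition D4 :: "(point \<Rightarrow> 4 \<Rightarrow> 4 \<Rightarrow> 4 \<Rightarrow> 4 \<Rightarrow> real) \<Rightarrow> point \<Rightarrow> 4 \<Rightarrow> 4 \<Rightarrow> 4 \<Rightarrow> 4 \<Rightarrow> 4 \<Rightarrow> real" where
  "D4 A x m i j k l = pd (\<lambda>y. A y i j k l) m x - (\<Sum>p\<in>UNIV. Chr g x p m i * A x p j k l)
     - (\<Sum>p\<in>UNIV. Chr g x p m j * A x i p k l) - (\<Sum>p\<in>UNIV. Chr g x p m k * A x i j p l)
     - (\<Sum>p\<in>UNIV. Chr g x p m l * A x i j k p)"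

lemma cov_as2: "cov g (as2 B) x [m, i, j] = D2 B x m i j"
  by (simp add: cov_def as2_def D2_def numeral_2_eq_2 sum.lessThan_Suc)

lemma cov_as4: "cov g (as4 A) x [m, i, j, k, l] = D4 A x m i j k l"
  by (simp add: cov_def as4_def D4_def eval_nat_numeral sum.lessThan_Suc algebra_simps)

lemma D2_g: "x \<in> U \<Longrightarrow> D2 g x m i j = 0"
  by (simp add: D2_def compat)

lemma D4_add: "(\<And>i j k l. (\<lambda>y. A y i j k l) differentiable (at x)) \<Longrightarrow> (\<And>i j k l. (\<lambda>y. B y i j k l) differentiable (at x)) \<Longrightarrow>
  D4 (\<lambda>y i j k l. A y i j k l + B y i j k l) x m i j k l = D4 A x m i j k l + D4 B x m i j k l"
  by (simp add: D4_def pd_add sum.distrib algebra_simps)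

lemma D4_diff: "(\<And>i j k l. (\<lambda>y. A y i j k l) differentiable (at x)) \<Longrightarrow> (\<And>i j k l. (\<lambda>y. B y i j k l) differentiable (at x)) \<Longrightarrow>
  D4 (\<lambda>y i j k l. A y i j k l - B y i j k l) x m i j k l = D4 A x m i j k l - D4 B x m i j k l"
  by (simp add: D4_def pd_diff sum_subtractf algebra_simps)

lemma D4_cmult: "(\<And>i j k l. (\<lambda>y. A y i j k l) differentiable (at x)) \<Longrightarrow>
  D4 (\<lambda>y i j k l. c * A y i j k l) x m i j k l = c * D4 A x m i j k l"
  by (simp add: D4_def pd_cmult sum_distrib_left algebra_simps)

lemma D2_add: "(\<And>i j. (\<lambda>y. A y i j) differentiable (at x)) \<Longrightarrow> (\<And>i j. (\<lambda>y. B y i j) differentiable (at x)) \<Longrightarrow>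
  D2 (\<lambda>y i j. A y i j + B y i j) x m i j = D2 A x m i j + D2 B x m i j"
  by (simp add: D2_def pd_add sum.distrib algebra_simps)

lemma D2_diff: "(\<And>i j. (\<lambda>y. A y i j) differentiable (at x)) \<Longrightarrow> (\<And>i j. (\<lambda>y. B y i j) differentiable (at x)) \<Longrightarrow>
  D2 (\<lambda>y i j. A y i j - B y i j) x m i j = D2 A x m i j - D2 B x m i j"
  by (simp add: D2_def pd_diff sum_subtractf algebra_simps)

lemma D2_cmult: "(\<And>i j. (\<lambda>y. A y i j) differentiable (at x)) \<Longrightarrow>
  D2 (\<lambda>y i j. c * A y i j) x m i j = c * D2 A x m i j"
  by (simp add: D2_def pd_cmult sum_distrib_left algebra_simps)

lemma D2_sg: assumes x: "x \<in> U" and s: "s differentiable (at x)"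
  shows "D2 (\<lambda>y i j. s y * g y i j) x m i j = pd s m x * g x i j"
proof -
  have "pd (\<lambda>y. s y * g y i j) m x = s x * pd (\<lambda>y. g y i j) m x + pd s m x * g x i j"
    by (rule pd_mult[OF s sm_diffble[OF g_sm x]])
  then show ?thesis unfolding D2_def compat[OF x]
    by (simp add: sum_distrib_left algebra_simps)
qed

lemma gdiff: "x \<in> U \<Longrightarrow> (\<lambda>y. g y i j) differentiable (at x)"
  by (rule sm_diffble[OF g_sm])

lemma D4_P1: assumes x: "x \<in> U" and F: "\<And>i j. (\<lambda>y. F y i j) differentiable (at x)"
  shows "D4 (\<lambda>y i j k l. g y j k * F y i l) x m i j k l = g x j k * D2 F x m i l"
proof -
  have "pd (\<lambda>y. g y j k * F y i l) m x = g x j k * pd (\<lambda>y. F y i l) m x + pd (\<lambda>y. g y j k) m x * F x i l"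
    by (rule pd_mult[OF gdiff[OF x] F])
  then show ?thesis unfolding D4_def D2_def compat[OF x]
    by (simp add: sum_distrib_left sum_distrib_right algebra_simps)
qed

lemma D4_P2: assumes x: "x \<in> U" and F: "\<And>i j. (\<lambda>y. F y i j) differentiable (at x)"
  shows "D4 (\<lambda>y i j k l. g y j l * F y i k) x m i j k l = g x j l * D2 F x m i k"
proof -
  have "pd (\<lambda>y. g y j l * F y i k) m x = g x j l * pd (\<lambda>y. F y i k) m x + pd (\<lambda>y. g y j l) m x * F x i k"
    by (rule pd_mult[OF gdiff[OF x] F])
  then show ?thesis unfolding D4_def D2_def compat[OF x]
    by (simp add: sum_distrib_left sum_distrib_right algebra_simps)
qed

lemma D4_P3: assumes x: "x \<in> U" and F: "\<And>i j. (\<lambda>y. F y i j) differentiable (at x)"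
  shows "D4 (\<lambda>y i j k l. g y i l * F y j k) x m i j k l = g x i l * D2 F x m j k"
proof -
  have "pd (\<lambda>y. g y i l * F y j k) m x = g x i l * pd (\<lambda>y. F y j k) m x + pd (\<lambda>y. g y i l) m x * F x j k"
    by (rule pd_mult[OF gdiff[OF x] F])
  then show ?thesis unfolding D4_def D2_def compat[OF x]
    by (simp add: sum_distrib_left sum_distrib_right algebra_simps)
qed

lemma D4_P4: assumes x: "x \<in> U" and F: "\<And>i j. (\<lambda>y. F y i j) differentiable (at x)"
  shows "D4 (\<lambda>y i j k l. g y i k * F y j l) x m i j k l = g x i k * D2 F x m j l"
proof -
  have "pd (\<lambda>y. g y i k * F y j l) m x = g x i k * pd (\<lambda>y. F y j l) m x + pd (\<lambda>y. g y i k) m x * F x j l"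
    by (rule pd_mult[OF gdiff[OF x] F])
  then show ?thesis unfolding D4_def D2_def compat[OF x]
    by (simp add: sum_distrib_left sum_distrib_right algebra_simps)
qed

lemma Riem_anti: "Riem g x j i k l = - Riem g x i j k l"
  unfolding Riem_def by (simp add: sum_negf[symmetric] sum_subtractf algebra_simps)

lemma D4_Riem_anti: assumes x: "x \<in> U"
  shows "D4 (Riem g) x m j i k l = - D4 (Riem g) x m i j k l"
proof -
  have "pd (\<lambda>y. Riem g y j i k l) m x = pd (\<lambda>y. - Riem g y i j k l) m x"
    by (simp only: Riem_anti[of _ j i k l])
  also have "\<dots> = - pd (\<lambda>y. Riem g y i j k l) m x"
    by (rule pd_minus[OF sm_diffble[OF Riem_sm x]])
  moreover have "\<And>p. Riem g x j p k l = - Riem g x p j k l" "\<And>p. Riem g x p i k l = - Riem g x i p k l"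
    "\<And>p. Riem g x j i p l = - Riem g x i j p l" "\<And>p. Riem g x j i k p = - Riem g x i j k p"
    by (rule Riem_anti)+
  ultimately show ?thesis unfolding D4_def
    by (simp add: sum_negf algebra_simps)
qed

end



context ST begin

lemma Riem_d: "x \<in> U \<Longrightarrow> (\<lambda>y. Riem g y i j k l) differentiable (at x)" by (rule sm_diffble[OF Riem_sm])
lemma Ric_d: "x \<in> U \<Longrightarrow> (\<lambda>y. Ric g y i j) differentiable (at x)" by (rule sm_diffble[OF Ric_sm])
lemma Scal_d: "x \<in> U \<Longrightarrow> (\<lambda>y. Scal g y) differentiable (at x)" by (rule sm_diffble[OF Scal_sm])

lemma D4_cdiv: "(\<And>i j k l. (\<lambda>y. A y i j k l) differentiable (at x)) \<Longrightarrow>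
  D4 (\<lambda>y i j k l. A y i j k l / c) x m i j k l = D4 A x m i j k l / c"
  using D4_cmult[of A x "1/c" m i j k l] by simp

lemma D2_cdiv: "(\<And>i j. (\<lambda>y. A y i j) differentiable (at x)) \<Longrightarrow>
  D2 (\<lambda>y i j. A y i j / c) x m i j = D2 A x m i j / c"
  using D2_cmult[of A x "1/c" m i j] by simp

lemmas dsimps = Riem_d Ric_d Scal_d gdiff

lemma Wstar_eq: "Wstar g = (\<lambda>y i j k l. Riem g y i j k l - (1/3) * (g y j k * Ric g y i l - g y j l * Ric g y i k))"
  by (simp add: fun_eq_iff Wstar_def)

lemma step1: assumes x: "x \<in> U"
  shows "D4 (Wstar g) x m i j k l = D4 (Riem g) x m i j k l - (1/3) * (g x j k * D2 (Ric g) x m i l - g x j l * D2 (Ric g) x m i k)"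
  unfolding Wstar_eq
  by (simp add: D4_diff D4_cmult D4_cdiv D4_P1 D4_P2 dsimps x)


lemma h2: assumes x: "x \<in> U" shows "(\<Sum>j\<in>UNIV. g x j l * ginv g x j k) = (if l = k then 1 else 0)"
proof -
  have "(\<Sum>j\<in>UNIV. g x j l * ginv g x j k) = (\<Sum>j\<in>UNIV. g x l j * ginv g x j k)"
    by (rule sum.cong[OF refl]) (metis g_sym[OF x])
  then show ?thesis by (simp add: g_ginv[OF x])
qed

lemma h3: assumes x: "x \<in> U" shows "(\<Sum>k\<in>UNIV. ginv g x j k * g x i k) = (if j = i then 1 else 0)"
proof -
  have "(\<Sum>k\<in>UNIV. ginv g x j k * g x i k) = (\<Sum>k\<in>UNIV. ginv g x j k * g x k i)"
    by (rule sum.cong[OF refl]) (metis g_sym[OF x])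
  then show ?thesis by (simp add: ginv_g[OF x])
qed

lemma Ecov: assumes x: "x \<in> U" and W0: "\<And>m i j k l. D4 (Wstar g) x m i j k l = 0"
  shows "D2 (Ric g) x m i l = g x i l * (\<Sum>j\<in>UNIV. \<Sum>k\<in>UNIV. ginv g x j k * D2 (Ric g) x m j k) / 4"
proof -
  define E where "E = D2 (Ric g) x m"
  define S where "S = (\<Sum>j\<in>UNIV. \<Sum>k\<in>UNIV. ginv g x j k * E j k)"
  have R: "D4 (Riem g) x m i j k l = (1/3) * (g x j k * E i l - g x j l * E i k)" for i j k l
    using step1[OF x, of m i j k l] W0[of m i j k l] by (simp add: E_def)
  have Z: "g x j k * E i l - g x j l * E i k + (g x i k * E j l - g x i l * E j k) = 0" for i j k l
    using D4_Riem_anti[OF x, of m i j k l] R[of i j k l] R[of j i k l] by simp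
  have t1: "(\<Sum>j\<in>UNIV. \<Sum>k\<in>UNIV. ginv g x j k * (g x j k * E i l)) = 4 * E i l"
  proof -
    have "(\<Sum>j\<in>UNIV. \<Sum>k\<in>UNIV. ginv g x j k * (g x j k * E i l)) = (\<Sum>j\<in>UNIV. E i l * (\<Sum>k\<in>UNIV. ginv g x j k * g x j k))"
      by (simp add: sum_distrib_left mult_ac)
    also have "\<dots> = 4 * E i l" by (simp add: h3[OF x])
    finally show ?thesis .
  qed
  have t2: "(\<Sum>j\<in>UNIV. \<Sum>k\<in>UNIV. ginv g x j k * (g x j l * E i k)) = E i l"
  proof -
    have "(\<Sum>j\<in>UNIV. \<Sum>k\<in>UNIV. ginv g x j k * (g x j l * E i k)) = (\<Sum>k\<in>UNIV. \<Sum>j\<in>UNIV. ginv g x j k * (g x j l * E i k))"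
      by (rule sum.swap)
    also have "\<dots> = (\<Sum>k\<in>UNIV. E i k * (\<Sum>j\<in>UNIV. g x j l * ginv g x j k))"
      by (simp add: sum_distrib_left mult_ac)
    also have "\<dots> = E i l" by (simp add: h2[OF x])
    finally show ?thesis .
  qed
  have t3: "(\<Sum>j\<in>UNIV. \<Sum>k\<in>UNIV. ginv g x j k * (g x i k * E j l)) = E i l"
  proof -
    have "(\<Sum>j\<in>UNIV. \<Sum>k\<in>UNIV. ginv g x j k * (g x i k * E j l)) = (\<Sum>j\<in>UNIV. E j l * (\<Sum>k\<in>UNIV. ginv g x j k * g x i k))"
      by (simp add: sum_distrib_left mult_ac)
    also have "\<dots> = E i l" by (simp add: h3[OF x])
    finally show ?thesis .
  qed
  have t4: "(\<Sum>j\<in>UNIV. \<Sum>k\<in>UNIV. ginv g x j k * (g x i l * E j k)) = g x i l * S"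
    by (simp add: S_def sum_distrib_left mult_ac)
  have "0 = (\<Sum>j\<in>UNIV. \<Sum>k\<in>UNIV. ginv g x j k * (g x j k * E i l - g x j l * E i k + (g x i k * E j l - g x i l * E j k)))"
    using Z by simp
  also have "\<dots> = (\<Sum>j\<in>UNIV. \<Sum>k\<in>UNIV. ginv g x j k * (g x j k * E i l)) - (\<Sum>j\<in>UNIV. \<Sum>k\<in>UNIV. ginv g x j k * (g x j l * E i k))
     + ((\<Sum>j\<in>UNIV. \<Sum>k\<in>UNIV. ginv g x j k * (g x i k * E j l)) - (\<Sum>j\<in>UNIV. \<Sum>k\<in>UNIV. ginv g x j k * (g x i l * E j k)))"
    by (simp add: algebra_simps sum.distrib sum_subtractf)
  also have "\<dots> = 4 * E i l - g x i l * S" using t1 t2 t3 t4 by simp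
  finally show ?thesis unfolding E_def[symmetric] S_def by simp
qed

end



context ST begin

lemma swap3: "(\<Sum>a\<in>(UNIV::'a::finite set). \<Sum>b\<in>(UNIV::'b::finite set). \<Sum>c\<in>(UNIV::'c::finite set). f a b c) =
   (\<Sum>c\<in>UNIV. \<Sum>b\<in>UNIV. \<Sum>a\<in>UNIV. f a b c)"
proof -
  have "(\<Sum>a\<in>(UNIV::'a set). \<Sum>b\<in>(UNIV::'b set). \<Sum>c\<in>(UNIV::'c set). f a b c) = (\<Sum>a\<in>UNIV. \<Sum>c\<in>UNIV. \<Sum>b\<in>UNIV. f a b c)"
    by (rule sum.cong[OF refl], rule sum.swap)
  also have "\<dots> = (\<Sum>c\<in>UNIV. \<Sum>a\<in>UNIV. \<Sum>b\<in>UNIV. f a b c)" by (rule sum.swap)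
  also have "\<dots> = (\<Sum>c\<in>UNIV. \<Sum>b\<in>UNIV. \<Sum>a\<in>UNIV. f a b c)"
    by (rule sum.cong[OF refl], rule sum.swap)
  finally show ?thesis .
qed

lemma dginv2: assumes x: "x \<in> U"
  shows "pd (\<lambda>y. ginv g y a b) m x = - (\<Sum>c\<in>UNIV. ginv g x a c * Chr g x b m c) - (\<Sum>d\<in>UNIV. Chr g x a m d * ginv g x d b)"
proof -
  define C where "C p c = Chr g x p m c" for p c
  define I where "I = ginv g x"
  have L1: "(\<Sum>d\<in>UNIV. (\<Sum>c\<in>UNIV. I a c * (\<Sum>p\<in>UNIV. C p c * g x p d)) * I d b) = (\<Sum>c\<in>UNIV. I a c * C b c)"
  proof -
    have "(\<Sum>d\<in>UNIV. (\<Sum>c\<in>UNIV. I a c * (\<Sum>p\<in>UNIV. C p c * g x p d)) * I d b) =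
        (\<Sum>d\<in>UNIV. \<Sum>c\<in>UNIV. \<Sum>p\<in>UNIV. I a c * C p c * (g x p d * I d b))"
      by (simp add: sum_distrib_left sum_distrib_right mult_ac)
    also have "\<dots> = (\<Sum>c\<in>UNIV. \<Sum>d\<in>UNIV. \<Sum>p\<in>UNIV. I a c * C p c * (g x p d * I d b))"
      by (rule sum.swap)
    also have "\<dots> = (\<Sum>c\<in>UNIV. \<Sum>p\<in>UNIV. \<Sum>d\<in>UNIV. I a c * C p c * (g x p d * I d b))"
      by (rule sum.cong[OF refl], rule sum.swap)
    also have "\<dots> = (\<Sum>c\<in>UNIV. \<Sum>p\<in>UNIV. I a c * C p c * (\<Sum>d\<in>UNIV. g x p d * I d b))"
      by (simp add: sum_distrib_left)
    also have "\<dots> = (\<Sum>c\<in>UNIV. I a c * C b c)"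
      by (simp add: I_def g_ginv[OF x])
    finally show ?thesis .
  qed
  have L2: "(\<Sum>d\<in>UNIV. (\<Sum>c\<in>UNIV. I a c * (\<Sum>p\<in>UNIV. C p d * g x c p)) * I d b) = (\<Sum>d\<in>UNIV. C a d * I d b)"
  proof -
    have "(\<Sum>d\<in>UNIV. (\<Sum>c\<in>UNIV. I a c * (\<Sum>p\<in>UNIV. C p d * g x c p)) * I d b) =
        (\<Sum>d\<in>UNIV. \<Sum>c\<in>UNIV. \<Sum>p\<in>UNIV. (I a c * g x c p) * (C p d * I d b))"
      by (simp add: sum_distrib_left sum_distrib_right mult_ac)
    also have "\<dots> = (\<Sum>d\<in>UNIV. \<Sum>p\<in>UNIV. \<Sum>c\<in>UNIV. (I a c * g x c p) * (C p d * I d b))"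
      by (rule sum.cong[OF refl], rule sum.swap)
    also have "\<dots> = (\<Sum>d\<in>UNIV. \<Sum>p\<in>UNIV. (\<Sum>c\<in>UNIV. I a c * g x c p) * (C p d * I d b))"
      by (simp add: sum_distrib_right)
    also have "\<dots> = (\<Sum>d\<in>UNIV. C a d * I d b)"
      by (simp add: I_def ginv_g[OF x])
    finally show ?thesis .
  qed
  have "pd (\<lambda>y. ginv g y a b) m x =
    - (\<Sum>d\<in>UNIV. (\<Sum>c\<in>UNIV. I a c * ((\<Sum>p\<in>UNIV. C p c * g x p d) + (\<Sum>p\<in>UNIV. C p d * g x c p))) * I d b)"
    unfolding dginv[OF x] compat[OF x] C_def I_def ..
  also have "\<dots> = - ((\<Sum>d\<in>UNIV. (\<Sum>c\<in>UNIV. I a c * (\<Sum>p\<in>UNIV. C p c * g x p d)) * I d b)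
      + (\<Sum>d\<in>UNIV. (\<Sum>c\<in>UNIV. I a c * (\<Sum>p\<in>UNIV. C p d * g x c p)) * I d b))"
    by (simp add: distrib_left distrib_right sum.distrib)
  also have "\<dots> = - (\<Sum>c\<in>UNIV. I a c * C b c) - (\<Sum>d\<in>UNIV. C a d * I d b)"
    unfolding L1 L2 by simp
  finally show ?thesis by (simp add: C_def I_def Chr_sym[OF x])
qed


lemma dScal: assumes x: "x \<in> U"
  shows "pd (Scal g) m x = (\<Sum>j\<in>UNIV. \<Sum>k\<in>UNIV. ginv g x j k * D2 (Ric g) x m j k)"
proof -
  define C where "C p c = Chr g x p m c" for p c
  define I where "I = ginv g x"
  define R where "R = Ric g x"
  define E where "E = D2 (Ric g) x m"
  define A where "A j k = (\<Sum>p\<in>UNIV. C p j * R p k)" for j k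
  define B where "B j k = (\<Sum>p\<in>UNIV. C p k * R j p)" for j k
  define P where "P j k = (\<Sum>c\<in>UNIV. I j c * C k c)" for j k
  define Q where "Q j k = (\<Sum>d\<in>UNIV. C j d * I d k)" for j k
  have se: "Scal g = (\<lambda>y. \<Sum>j\<in>UNIV. \<Sum>k\<in>UNIV. ginv g y j k * Ric g y j k)"
    by (rule ext) (simp add: Scal_def)
  have "pd (Scal g) m x = (\<Sum>j\<in>UNIV. pd (\<lambda>y. \<Sum>k\<in>UNIV. ginv g y j k * Ric g y j k) m x)"
    unfolding se by (rule pd_sum) (auto intro!: sm_diffble[OF _ x] smI Ric_sm)
  also have "\<dots> = (\<Sum>j\<in>UNIV. \<Sum>k\<in>UNIV. pd (\<lambda>y. ginv g y j k * Ric g y j k) m x)"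
    by (rule sum.cong[OF refl], rule pd_sum) (auto intro!: sm_diffble[OF _ x] smI Ric_sm)
  also have "\<dots> = (\<Sum>j\<in>UNIV. \<Sum>k\<in>UNIV. I j k * pd (\<lambda>y. Ric g y j k) m x + pd (\<lambda>y. ginv g y j k) m x * R j k)"
    by (rule sum.cong[OF refl], rule sum.cong[OF refl], unfold I_def R_def, rule pd_mult)
       (auto intro!: sm_diffble[OF _ x] smI Ric_sm)
  also have "\<dots> = (\<Sum>j\<in>UNIV. \<Sum>k\<in>UNIV. I j k * (E j k + A j k + B j k) + (- P j k - Q j k) * R j k)"
    by (simp add: E_def A_def B_def P_def Q_def D2_def dginv2[OF x] C_def I_def R_def)
  also have "\<dots> = (\<Sum>j\<in>UNIV. \<Sum>k\<in>UNIV. I j k * E j k) + ((\<Sum>j\<in>UNIV. \<Sum>k\<in>UNIV. I j k * A j k) - (\<Sum>j\<in>UNIV. \<Sum>k\<in>UNIV. Q j k * R j k))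
      + ((\<Sum>j\<in>UNIV. \<Sum>k\<in>UNIV. I j k * B j k) - (\<Sum>j\<in>UNIV. \<Sum>k\<in>UNIV. P j k * R j k))"
    by (simp add: algebra_simps sum.distrib sum_subtractf)
  also have "(\<Sum>j\<in>UNIV. \<Sum>k\<in>UNIV. I j k * A j k) = (\<Sum>j\<in>UNIV. \<Sum>k\<in>UNIV. Q j k * R j k)"
  proof -
    have "(\<Sum>j\<in>UNIV. \<Sum>k\<in>UNIV. I j k * A j k) = (\<Sum>j\<in>UNIV. \<Sum>k\<in>UNIV. \<Sum>p\<in>UNIV. C p j * I j k * R p k)"
      by (simp add: A_def sum_distrib_left mult_ac)
    also have "\<dots> = (\<Sum>p\<in>UNIV. \<Sum>k\<in>UNIV. \<Sum>j\<in>UNIV. C p j * I j k * R p k)"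
      by (rule swap3)
    also have "\<dots> = (\<Sum>j\<in>UNIV. \<Sum>k\<in>UNIV. Q j k * R j k)"
      by (simp add: Q_def sum_distrib_right)
    finally show ?thesis .
  qed
  also have "(\<Sum>j\<in>UNIV. \<Sum>k\<in>UNIV. I j k * B j k) = (\<Sum>j\<in>UNIV. \<Sum>k\<in>UNIV. P j k * R j k)"
  proof -
    have "(\<Sum>j\<in>UNIV. \<Sum>k\<in>UNIV. I j k * B j k) = (\<Sum>j\<in>UNIV. \<Sum>k\<in>UNIV. \<Sum>p\<in>UNIV. I j k * C p k * R j p)"
      by (simp add: B_def sum_distrib_left mult_ac)
    also have "\<dots> = (\<Sum>j\<in>UNIV. \<Sum>p\<in>UNIV. \<Sum>k\<in>UNIV. I j k * C p k * R j p)"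
      by (rule sum.cong[OF refl], rule sum.swap)
    also have "\<dots> = (\<Sum>j\<in>UNIV. \<Sum>k\<in>UNIV. P j k * R j k)"
      by (simp add: P_def sum_distrib_right)
    finally show ?thesis .
  qed
  finally show ?thesis by (simp add: I_def E_def)
qed

end



lemma par_semi: assumes U: "open U" and z: "\<forall>y\<in>U. \<forall>l. length l = Suc r \<longrightarrow> cov g A y l = 0"
  shows "semi_symmetric_on U g r A"
proof -
  have zz: "cov g (cov g A) x (mu # nu # idx) = 0" if x: "x \<in> U" and l: "length idx = r" for x mu nu idx
  proof -
    have "pd (\<lambda>y. cov g A y (nu # idx)) mu x = 0"
      by (rule pd_zero_local[OF U x]) (use z l in auto)
    moreover have "cov g A x ((nu # idx)[a := p]) = 0" for a p
    proof -
      have "length ((nu # idx)[a := p]) = Suc r" by (simp only: length_list_update length_Cons l)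
      then show ?thesis using z x by blast
    qed
    ultimately show ?thesis by (simp add: cov_def)
  qed
  show ?thesis unfolding semi_symmetric_on_def using zz by simp
qed

context ST begin

lemma Weyl_eq: "Weyl g = (\<lambda>y i j k l. Riem g y i j k l
   - (g y j k * Ric g y i l - g y j l * Ric g y i k + g y i l * Ric g y j k - g y i k * Ric g y j l) / 2
   + (g y j k * (Scal g y * g y i l) - g y j l * (Scal g y * g y i k)) / 6)"
  by (rule ext)+ (simp add: Weyl_def field_simps)

lemma Eg: assumes x: "x \<in> U" and W0: "\<And>m i j k l. D4 (Wstar g) x m i j k l = 0"
  shows "D2 (Ric g) x m i l = g x i l * pd (Scal g) m x / 4"
  using Ecov[OF x W0, of m i l] dScal[OF x, of m] by simp

lemma DR: assumes x: "x \<in> U" and W0: "\<And>m i j k l. D4 (Wstar g) x m i j k l = 0"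
  shows "D4 (Riem g) x m i j k l = (g x j k * g x i l - g x j l * g x i k) * pd (Scal g) m x / 12"
  using step1[OF x, of m i j k l] W0[of m i j k l] Eg[OF x W0, of m i l] Eg[OF x W0, of m i k]
  by (simp add: algebra_simps)

lemma D4_Weyl: assumes x: "x \<in> U" and W0: "\<And>m i j k l. D4 (Wstar g) x m i j k l = 0"
  shows "D4 (Weyl g) x m i j k l = 0"
proof -
  have sgd: "(\<lambda>y. Scal g y * g y i j) differentiable (at x)" for i j
    using dsimps x by simp
  show ?thesis
    unfolding Weyl_eq
    apply (simp add: D4_add D4_diff D4_cdiv D4_P1 D4_P2 D4_P3 D4_P4 D2_sg dsimps x sgd)
    apply (simp add: Eg[OF x W0] DR[OF x W0] algebra_simps)
    apply (simp add: field_simps)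
    done
qed

end



lemma dir_deriv: fixes h :: "real^4 \<Rightarrow> real" and q :: "real^4" assumes "h differentiable (at (q + s *\<^sub>R axis k 1))"
  shows "((\<lambda>t. h (q + t *\<^sub>R axis k (1::real))) has_real_derivative pd h k (q + s *\<^sub>R axis k 1)) (at s)"
proof -
  let ?w = "axis k (1::real) :: real^4"
  let ?F = "frechet_derivative h (at (q + s *\<^sub>R ?w))"
  have 1: "((\<lambda>t. q + t *\<^sub>R ?w) has_derivative (\<lambda>t. t *\<^sub>R ?w)) (at s)"
    by (auto intro!: derivative_eq_intros)
  have 2: "(h has_derivative ?F) (at (q + s *\<^sub>R ?w))" using frechet_derivative_works assms by blast
  have 3: "((\<lambda>t. h (q + t *\<^sub>R ?w)) has_derivative (\<lambda>t. ?F (t *\<^sub>R ?w))) (at s)"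
    using has_derivative_compose[OF 1 2] by simp
  have lin: "?F (t *\<^sub>R ?w) = pd h k (q + s *\<^sub>R ?w) * t" for t
    using linear_scale[OF has_derivative_linear[OF 2], of t ?w] by (simp add: pd_def)
  have "((\<lambda>t. h (q + t *\<^sub>R ?w)) has_derivative (*) (pd h k (q + s *\<^sub>R ?w))) (at s)"
    by (rule has_derivative_eq_rhs[OF 3]) (rule ext, rule lin)
  then show ?thesis by (simp add: has_field_derivative_def)
qed

lemma mvt_dir: fixes h :: "real^4 \<Rightarrow> real" and q :: "real^4" assumes t: "0 < t" and d: "\<And>s. 0 \<le> s \<Longrightarrow> s \<le> t \<Longrightarrow> h differentiable (at (q + s *\<^sub>R axis k 1))"
  shows "\<exists>s. 0 < s \<and> s < t \<and> h (q + t *\<^sub>R axis k 1) - h q = t * pd h k (q + s *\<^sub>R axis k (1::real))"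
proof -
  let ?p = "\<lambda>s. h (q + s *\<^sub>R axis k (1::real))"
  have D: "0 \<le> s \<Longrightarrow> s \<le> t \<Longrightarrow> (?p has_real_derivative pd h k (q + s *\<^sub>R axis k 1)) (at s)" for s
    using dir_deriv d by blast
  have c: "continuous_on {0..t} ?p"
    using D by (auto intro!: continuous_at_imp_continuous_on DERIV_isCont)
  have dd: "0 < s \<Longrightarrow> s < t \<Longrightarrow> ?p differentiable (at s)" for s
    using D real_differentiable_def by (meson less_eq_real_def)
  obtain l z where z: "0 < z" "z < t" "DERIV ?p z :> l" "?p t - ?p 0 = (t - 0) * l"
    using MVT[OF t c dd] by blast
  have "l = pd h k (q + z *\<^sub>R axis k 1)" using DERIV_unique[OF z(3) D] z by simp
  then have "h (q + t *\<^sub>R axis k 1) - h q = t * pd h k (q + z *\<^sub>R axis k (1::real))" using z(4) by simp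
  then show ?thesis using z(1,2) by blast
qed

lemma mvt_dir2: fixes h :: "real^4 \<Rightarrow> real" and q1 q2 :: "real^4" assumes t: "0 < t"
  and d: "\<And>s. 0 \<le> s \<Longrightarrow> s \<le> t \<Longrightarrow> h differentiable (at (q1 + s *\<^sub>R axis k 1))"
  and d2: "\<And>s. 0 \<le> s \<Longrightarrow> s \<le> t \<Longrightarrow> h differentiable (at (q2 + s *\<^sub>R axis k 1))"
  shows "\<exists>s. 0 < s \<and> s < t \<and> (h (q1 + t *\<^sub>R axis k 1) - h (q2 + t *\<^sub>R axis k 1)) - (h q1 - h q2)
      = t * (pd h k (q1 + s *\<^sub>R axis k (1::real)) - pd h k (q2 + s *\<^sub>R axis k 1))"
proof -
  let ?p = "\<lambda>s. h (q1 + s *\<^sub>R axis k (1::real)) - h (q2 + s *\<^sub>R axis k 1)"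
  have D: "0 \<le> s \<Longrightarrow> s \<le> t \<Longrightarrow> (?p has_real_derivative (pd h k (q1 + s *\<^sub>R axis k 1) - pd h k (q2 + s *\<^sub>R axis k 1))) (at s)" for s
    by (rule DERIV_diff[OF dir_deriv[OF d] dir_deriv[OF d2]])
  have c: "continuous_on {0..t} ?p"
    using D by (auto intro!: continuous_at_imp_continuous_on DERIV_isCont)
  have dd: "0 < s \<Longrightarrow> s < t \<Longrightarrow> ?p differentiable (at s)" for s
    using D real_differentiable_def by (meson less_eq_real_def)
  obtain l z where z: "0 < z" "z < t" "DERIV ?p z :> l" "?p t - ?p 0 = (t - 0) * l"
    using MVT[OF t c dd] by blast
  have "l = pd h k (q1 + z *\<^sub>R axis k 1) - pd h k (q2 + z *\<^sub>R axis k 1)" using DERIV_unique[OF z(3) D] z by simp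
  then have "(h (q1 + t *\<^sub>R axis k 1) - h (q2 + t *\<^sub>R axis k 1)) - (h q1 - h q2)
      = t * (pd h k (q1 + z *\<^sub>R axis k (1::real)) - pd h k (q2 + z *\<^sub>R axis k 1))" using z(4) by simp
  then show ?thesis using z(1,2) by blast
qed


lemma nrm: "dist (x + a *\<^sub>R axis i (1::real) + b *\<^sub>R axis j 1) (x::real^4) \<le> \<bar>a\<bar> + \<bar>b\<bar>"
proof -
  have "dist (x + a *\<^sub>R axis i (1::real) + b *\<^sub>R axis j 1) x = norm (a *\<^sub>R axis i (1::real) + b *\<^sub>R axis j 1)"
    by (simp add: dist_norm)
  also have "\<dots> \<le> norm (a *\<^sub>R axis i (1::real)) + norm (b *\<^sub>R axis j (1::real))" by (rule norm_triangle_ineq)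
  also have "\<dots> = \<bar>a\<bar> + \<bar>b\<bar>" by simp
  finally show ?thesis .
qed

lemma clairaut: fixes f :: "real^4 \<Rightarrow> real"
  assumes U: "open U" and x: "x \<in> U" and f: "sm U f"
  shows "pd (pd f i) j x = pd (pd f j) i x"
proof (cases "i = j")
  case True then show ?thesis by simp
next
  case False
  define u where "u = (axis i 1 :: real^4)"
  define v where "v = (axis j 1 :: real^4)"
  define A where "A = pd (pd f i) j"
  define B where "B = pd (pd f j) i"
  obtain r where r: "r > 0" "ball x r \<subseteq> U" using U x open_contains_ball by blast
  have inU: "x + a *\<^sub>R u + b *\<^sub>R v \<in> U" if "0 \<le> a" "a \<le> t" "0 \<le> b" "b \<le> t" "2*t < r" for a b t
  proof -
    have "dist (x + a *\<^sub>R u + b *\<^sub>R v) x < r" using nrm[of x a i b j] that unfolding u_def v_def by simp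
    then show ?thesis using r(2) by (auto simp: dist_commute)
  qed
  have inU2: "x + b *\<^sub>R v + a *\<^sub>R u \<in> U" if "0 \<le> a" "a \<le> t" "0 \<le> b" "b \<le> t" "2*t < r" for a b t
  proof -
    have eq: "x + b *\<^sub>R v + a *\<^sub>R u = x + a *\<^sub>R u + b *\<^sub>R v" by (simp add: algebra_simps)
    show ?thesis unfolding eq by (rule inU[OF that])
  qed
  have fd: "p \<in> U \<Longrightarrow> f differentiable (at p)" for p using sm_diffble[OF f] by blast
  have fid: "p \<in> U \<Longrightarrow> pd f k differentiable (at p)" for p k using sm_diffble[OF sm_pd[OF f]] by blast
  have claim: "\<exists>p1 p2. dist p1 x < 2*t \<and> dist p2 x < 2*t \<and> A p1 = B p2" if t: "0 < t" "2*t < r" for t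
  proof -
    have e1: "\<exists>s. 0 < s \<and> s < t \<and> (f (x + t *\<^sub>R v + t *\<^sub>R u) - f (x + t *\<^sub>R u)) - (f (x + t *\<^sub>R v) - f x)
        = t * (pd f i (x + t *\<^sub>R v + s *\<^sub>R u) - pd f i (x + s *\<^sub>R u))"
    proof (rule mvt_dir2[of t f "x + t *\<^sub>R v" i x, folded u_def])
      show "0 < t" by fact
      fix s assume "0 \<le> s" "s \<le> t"
      have "x + t *\<^sub>R v + s *\<^sub>R u \<in> U" by (rule inU2[where t=t]) (use t \<open>0 \<le> s\<close> \<open>s \<le> t\<close> in auto)
      then show "f differentiable (at (x + t *\<^sub>R v + s *\<^sub>R u))" using fd by simp
      have "x + s *\<^sub>R u + 0 *\<^sub>R v \<in> U" by (rule inU[where t=t]) (use t \<open>0 \<le> s\<close> \<open>s \<le> t\<close> in auto)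
      then show "f differentiable (at (x + s *\<^sub>R u))" using fd by simp
    qed
    then obtain s1 where s1: "0 < s1" "s1 < t" "(f (x + t *\<^sub>R v + t *\<^sub>R u) - f (x + t *\<^sub>R u)) - (f (x + t *\<^sub>R v) - f x)
        = t * (pd f i (x + t *\<^sub>R v + s1 *\<^sub>R u) - pd f i (x + s1 *\<^sub>R u))" by blast
    have e2: "\<exists>s. 0 < s \<and> s < t \<and> pd f i (x + s1 *\<^sub>R u + t *\<^sub>R v) - pd f i (x + s1 *\<^sub>R u) = t * A (x + s1 *\<^sub>R u + s *\<^sub>R v)"
      unfolding A_def
    proof (rule mvt_dir[of t "pd f i" "x + s1 *\<^sub>R u" j, folded v_def])
      show "0 < t" by fact
      fix s assume "0 \<le> s" "s \<le> t"
      have "x + s1 *\<^sub>R u + s *\<^sub>R v \<in> U" by (rule inU[where t=t]) (use t s1 \<open>0 \<le> s\<close> \<open>s \<le> t\<close> in auto)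
      then show "pd f i differentiable (at (x + s1 *\<^sub>R u + s *\<^sub>R v))" using fid by simp
    qed
    then obtain r1 where r1: "0 < r1" "r1 < t" "pd f i (x + s1 *\<^sub>R u + t *\<^sub>R v) - pd f i (x + s1 *\<^sub>R u) = t * A (x + s1 *\<^sub>R u + r1 *\<^sub>R v)"
      by blast
    have e3: "\<exists>s. 0 < s \<and> s < t \<and> (f (x + t *\<^sub>R u + t *\<^sub>R v) - f (x + t *\<^sub>R v)) - (f (x + t *\<^sub>R u) - f x)
        = t * (pd f j (x + t *\<^sub>R u + s *\<^sub>R v) - pd f j (x + s *\<^sub>R v))"
    proof (rule mvt_dir2[of t f "x + t *\<^sub>R u" j x, folded v_def])
      show "0 < t" by fact
      fix s assume "0 \<le> s" "s \<le> t"
      have "x + t *\<^sub>R u + s *\<^sub>R v \<in> U" by (rule inU[where t=t]) (use t \<open>0 \<le> s\<close> \<open>s \<le> t\<close> in auto)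
      then show "f differentiable (at (x + t *\<^sub>R u + s *\<^sub>R v))" using fd by simp
      have "x + 0 *\<^sub>R u + s *\<^sub>R v \<in> U" by (rule inU[where t=t]) (use t \<open>0 \<le> s\<close> \<open>s \<le> t\<close> in auto)
      then show "f differentiable (at (x + s *\<^sub>R v))" using fd by simp
    qed
    then obtain s2 where s2: "0 < s2" "s2 < t" "(f (x + t *\<^sub>R u + t *\<^sub>R v) - f (x + t *\<^sub>R v)) - (f (x + t *\<^sub>R u) - f x)
        = t * (pd f j (x + t *\<^sub>R u + s2 *\<^sub>R v) - pd f j (x + s2 *\<^sub>R v))" by blast
    have e4: "\<exists>s. 0 < s \<and> s < t \<and> pd f j (x + s2 *\<^sub>R v + t *\<^sub>R u) - pd f j (x + s2 *\<^sub>R v) = t * B (x + s2 *\<^sub>R v + s *\<^sub>R u)"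
      unfolding B_def
    proof (rule mvt_dir[of t "pd f j" "x + s2 *\<^sub>R v" i, folded u_def])
      show "0 < t" by fact
      fix s assume "0 \<le> s" "s \<le> t"
      have "x + s2 *\<^sub>R v + s *\<^sub>R u \<in> U" by (rule inU2[where t=t]) (use t s2 \<open>0 \<le> s\<close> \<open>s \<le> t\<close> in auto)
      then show "pd f j differentiable (at (x + s2 *\<^sub>R v + s *\<^sub>R u))" using fid by simp
    qed
    then obtain r2 where r2: "0 < r2" "r2 < t" "pd f j (x + s2 *\<^sub>R v + t *\<^sub>R u) - pd f j (x + s2 *\<^sub>R v) = t * B (x + s2 *\<^sub>R v + r2 *\<^sub>R u)"
      by blast
    have p1: "x + t *\<^sub>R v + s1 *\<^sub>R u = x + s1 *\<^sub>R u + t *\<^sub>R v" by (simp add: algebra_simps)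
    have p2: "x + t *\<^sub>R u + s2 *\<^sub>R v = x + s2 *\<^sub>R v + t *\<^sub>R u" by (simp add: algebra_simps)
    have p3: "x + t *\<^sub>R v + t *\<^sub>R u = x + t *\<^sub>R u + t *\<^sub>R v" by (simp add: algebra_simps)
    have "t * (t * A (x + s1 *\<^sub>R u + r1 *\<^sub>R v)) = t * (t * B (x + s2 *\<^sub>R v + r2 *\<^sub>R u))"
      using s1(3) s2(3) r1(3) r2(3) unfolding p1 p2 p3 by (simp add: algebra_simps)
    then have AB: "A (x + s1 *\<^sub>R u + r1 *\<^sub>R v) = B (x + s2 *\<^sub>R v + r2 *\<^sub>R u)" using t by simp
    have d1: "dist (x + s1 *\<^sub>R u + r1 *\<^sub>R v) x < 2*t"
      using nrm[of x s1 i r1 j] s1 r1 unfolding u_def v_def by simp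
    have d2: "dist (x + s2 *\<^sub>R v + r2 *\<^sub>R u) x < 2*t"
      using nrm[of x s2 j r2 i] s2 r2 unfolding u_def v_def by simp
    show ?thesis using AB d1 d2 by blast
  qed
  have "continuous_on U A" unfolding A_def by (rule sm_cont[OF sm_pd[OF sm_pd[OF f]]])
  then have cA: "isCont A x" using continuous_on_eq_continuous_at[OF U] x by blast
  have "continuous_on U B" unfolding B_def by (rule sm_cont[OF sm_pd[OF sm_pd[OF f]]])
  then have cB: "isCont B x" using continuous_on_eq_continuous_at[OF U] x by blast
  show ?thesis unfolding A_def[symmetric] B_def[symmetric]
  proof (rule ccontr)
    assume ne: "A x \<noteq> B x"
    define e where "e = \<bar>A x - B x\<bar> / 2"
    have e: "e > 0" using ne by (simp add: e_def)
    obtain d1 where d1: "d1 > 0" "\<And>y. dist y x < d1 \<Longrightarrow> dist (A y) (A x) < e"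
      using cA e unfolding continuous_at_eps_delta by blast
    obtain d2 where d2: "d2 > 0" "\<And>y. dist y x < d2 \<Longrightarrow> dist (B y) (B x) < e"
      using cB e unfolding continuous_at_eps_delta by blast
    define t where "t = min r (min d1 d2) / 4"
    have m: "0 < min r (min d1 d2)" "min r (min d1 d2) \<le> r" "min r (min d1 d2) \<le> d1" "min r (min d1 d2) \<le> d2"
      using r d1 d2 by auto
    have t: "0 < t" "2*t < r" "2*t < d1" "2*t < d2" using m unfolding t_def by linarith+
    obtain p1 p2 where p: "dist p1 x < 2*t" "dist p2 x < 2*t" "A p1 = B p2" using claim[OF t(1,2)] by blast
    have "dist (A p1) (A x) < e" using d1(2) p(1) t(3) by fastforce
    moreover have "dist (B p2) (B x) < e" using d2(2) p(2) t(4) by fastforce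
    ultimately have "\<bar>A x - B x\<bar> < 2 * e" using p(3) unfolding dist_real_def by linarith
    then show False unfolding e_def by simp
  qed
qed




locale STE = ST +
  fixes T :: "point \<Rightarrow> 4 \<Rightarrow> 4 \<Rightarrow> real" and Lam kk :: real
  assumes kk: "kk \<noteq> 0"
    and ein: "\<And>y i j. y \<in> U \<Longrightarrow> Ric g y i j - (1/2) * Scal g y * g y i j + Lam * g y i j = kk * T y i j"
    and W0: "\<And>y m i j k l. y \<in> U \<Longrightarrow> D4 (Wstar g) y m i j k l = 0"
begin

definition Tp where "Tp y i j = (Ric g y i j - (Scal g y * g y i j) / 2 + Lam * g y i j) / kk"

lemma T_Tp: "y \<in> U \<Longrightarrow> T y i j = Tp y i j"
  using ein[of y i j] kk by (simp add: Tp_def field_simps)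

lemma Tp_sm: "sm U (\<lambda>y. Tp y i j)"
  unfolding Tp_def divide_inverse by (intro smI Ric_sm Scal_sm)

lemma D2_local: assumes x: "x \<in> U" and e: "\<And>y i j. y \<in> U \<Longrightarrow> B y i j = B' y i j"
  and d: "\<And>i j. (\<lambda>y. B' y i j) differentiable (at x)"
  shows "D2 B x m i j = D2 B' x m i j"
proof -
  have "pd (\<lambda>y. B' y i j) m x = pd (\<lambda>y. B y i j) m x"
    by (rule pd_local(1)[OF U_open x]) (use e d in auto)
  then show ?thesis unfolding D2_def using e[OF x] by simp
qed

lemma D2_Tp: assumes x: "x \<in> U"
  shows "D2 Tp x m i j = - (g x i j * pd (Scal g) m x) / (4 * kk)"
proof -
  have Tpe: "Tp = (\<lambda>y i j. (Ric g y i j - (Scal g y * g y i j) / 2 + Lam * g y i j) / kk)"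
    by (simp add: fun_eq_iff Tp_def)
  have sgd: "(\<lambda>y. Scal g y * g y i j) differentiable (at x)" for i j
    using dsimps x by simp
  show ?thesis
    unfolding Tpe
    apply (simp add: D2_add D2_diff D2_cdiv D2_cmult D2_sg D2_g dsimps x sgd)
    apply (simp add: Eg[OF x W0[OF x]] field_simps)
    done
qed

lemma covT: assumes y: "y \<in> U"
  shows "cov g (as2 T) y [n, i, j] = - (g y i j * pd (Scal g) n y) / (4 * kk)"
proof -
  have "cov g (as2 T) y [n, i, j] = D2 T y n i j" by (rule cov_as2)
  also have "\<dots> = D2 Tp y n i j"
    by (rule D2_local[OF y]) (auto simp: T_Tp intro: sm_diffble[OF Tp_sm y])
  finally show ?thesis using D2_Tp[OF y] by simp
qed


lemma cov3: "cov g A x [m, a, b, c] = pd (\<lambda>y. A y [a, b, c]) m x - (\<Sum>p\<in>UNIV. Chr g x p m a * A x [p, b, c])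
   - (\<Sum>p\<in>UNIV. Chr g x p m b * A x [a, p, c]) - (\<Sum>p\<in>UNIV. Chr g x p m c * A x [a, b, p])"
  by (simp add: cov_def eval_nat_numeral sum.lessThan_Suc algebra_simps)

lemma covT': "y \<in> U \<Longrightarrow> cov g (as2 T) y [n, i, j] = (- 1 / (4 * kk)) * (g y i j * pd (Scal g) n y)"
  using covT by simp

lemma covcovT: assumes x: "x \<in> U"
  shows "cov g (cov g (as2 T)) x [mu, nu, i, j] =
    (- 1 / (4 * kk)) * g x i j * (pd (pd (Scal g) nu) mu x - (\<Sum>p\<in>UNIV. Chr g x p mu nu * pd (Scal g) p x))"
proof -
  define c where "c = - 1 / (4 * kk)"
  have sd: "(\<lambda>y. pd (Scal g) nu y) differentiable (at x)" by (rule sm_diffble[OF sm_pd[OF Scal_sm] x])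
  have hd: "(\<lambda>y. c * (g y i j * pd (Scal g) nu y)) differentiable (at x)"
    using gdiff[OF x] sd by simp
  have "pd (\<lambda>y. cov g (as2 T) y [nu, i, j]) mu x = pd (\<lambda>y. c * (g y i j * pd (Scal g) nu y)) mu x"
    by (rule pd_local(1)[OF U_open x, symmetric]) (use hd covT' c_def in auto)
  also have "\<dots> = c * (g x i j * pd (pd (Scal g) nu) mu x + pd (\<lambda>y. g y i j) mu x * pd (Scal g) nu x)"
    using pd_cmult[of "\<lambda>y. g y i j * pd (Scal g) nu y" x c mu] pd_mult[OF gdiff[OF x, of i j] sd, of mu] gdiff[OF x, of i j] sd
    by simp
  finally have P: "pd (\<lambda>y. cov g (as2 T) y [nu, i, j]) mu x =
     c * (g x i j * pd (pd (Scal g) nu) mu x + ((\<Sum>p\<in>UNIV. Chr g x p mu i * g x p j) + (\<Sum>p\<in>UNIV. Chr g x p mu j * g x i p)) * pd (Scal g) nu x)"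
    by (simp add: compat[OF x])
  show ?thesis
    unfolding cov3 P covT'[OF x] c_def[symmetric]
    by (simp add: sum_distrib_left sum_distrib_right algebra_simps)
qed

lemma T_semi: "semi_symmetric_on U g 2 (as2 T)"
  unfolding semi_symmetric_on_def
proof (intro ballI allI impI)
  fix x mu nu and idx :: "4 list" assume x: "x \<in> U" and l: "length idx = 2"
  then obtain i j where idx: "idx = [i, j]"
    by (metis (no_types, opaque_lifting) One_nat_def Suc_1 length_0_conv length_Suc_conv)
  show "cov g (cov g (as2 T)) x (mu # nu # idx) = cov g (cov g (as2 T)) x (nu # mu # idx)"
    unfolding idx covcovT[OF x]
    using clairaut[OF U_open x Scal_sm, of nu mu] Chr_sym[OF x] by simp
qed

lemma Weyl_semi: "semi_symmetric_on U g 4 (as4 (Weyl g))"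
proof (rule par_semi[OF U_open], intro ballI allI impI)
  fix y and l :: "4 list" assume y: "y \<in> U" and l: "length l = Suc 4"
  then obtain m i j k n where "l = [m, i, j, k, n]"
    by (auto simp: length_Suc_conv numeral_eq_Suc)
  then show "cov g (as4 (Weyl g)) y l = 0"
    using D4_Weyl[OF y W0[OF y]] by (simp add: cov_as4)
qed

end


theorem mainTheorem5:
  fixes U :: "(real^4) set" and g :: metric and T :: "point \<Rightarrow> 4 \<Rightarrow> 4 \<Rightarrow> real"
    and \<Lambda> k :: real
  assumes spacetime: "lorentzian_metric_on U g"
    and k_nz: "k \<noteq> 0"
    and T_sym: "\<forall>x\<in>U. \<forall>i j. T x i j = T x j i"
    and einstein: "\<forall>x\<in>U. \<forall>i j.
        Ric g x i j - (1/2) * Scal g x * g x i j + \<Lambda> * g x i j = k * T x i j"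
    and Wstar_parallel: "covariantly_constant_on U g 4 (as4 (Wstar g))"
  shows "semi_symmetric_on U g 4 (as4 (Weyl g)) \<and> semi_symmetric_on U g 2 (as2 T)"
proof -
  interpret ST U g by unfold_locales (rule spacetime)
  have W0: "D4 (Wstar g) y a b c d e = 0" if y: "y \<in> U" for y a b c d e
  proof -
    have "cov g (as4 (Wstar g)) y [a, b, c, d, e] = 0"
      using Wstar_parallel y unfolding covariantly_constant_on_def by simp
    then show ?thesis by (simp add: cov_as4)
  qed
  interpret STE U g T \<Lambda> k
  proof unfold_locales
    show "k \<noteq> 0" by (rule k_nz)
    show "\<And>y i j. y \<in> U \<Longrightarrow> Ric g y i j - 1 / 2 * Scal g y * g y i j + \<Lambda> * g y i j = k * T y i j"
      using einstein by blast
    show "\<And>y a b c d e. y \<in> U \<Longrightarrow> D4 (Wstar g) y a b c d e = 0" by (rule W0)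
  qed
  show ?thesis using Weyl_semi T_semi by simp
qed

end
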